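(* For every oriented forest $F$, $\mathrm{mad}_{\vec{\chi}}(F)=|V(F)|$.
   Context: An oriented forest is an orientation of an undirected forest. $\vec{\chi}(D)$ is the dichromatic number (least $k$ such that $V(D)$ partitions into $k$ sets inducing acyclic subdigraphs). A subdivision of $F$ is obtained by replacing each arc $(x,y)$ by a directed $(x,y)$-path, internally disjoint with new internal vertices. $\mathrm{mad}_{\vec{\chi}}(F)$ is the least integer $c$ such that every digraph $D$ with $\vec{\chi}(D)\ge c$ contains a subdivision of $F$ as a subdigraph. *)

theory Defs
  imports Main
begin

text \<open>A (finite) digraph: finite vertex set V, arc set A \<subseteq> V \<times> V, no loops.
  Digons (opposite arcs) are allowed, as usual for the dichromatic number.\<close>
definition digraph :: "'a set \<Rightarrow> ('a \<times> 'a) set \<Rightarrow> bool" where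
  "digraph V A \<longleftrightarrow> finite V \<and> A \<subseteq> V \<times> V \<and> (\<forall>x. (x, x) \<notin> A)"

definition dicolourable :: "'a set \<Rightarrow> ('a \<times> 'a) set \<Rightarrow> nat \<Rightarrow> bool" where
  "dicolourable V A k \<longleftrightarrow>
     (\<exists>f :: 'a \<Rightarrow> nat. (\<forall>v\<in>V. f v < k) \<and>
        (\<forall>i<k. acyclic (A \<inter> ({v\<in>V. f v = i} \<times> {v\<in>V. f v = i}))))"

definition dichromatic_number :: "'a set \<Rightarrow> ('a \<times> 'a) set \<Rightarrow> nat" where
  "dichromatic_number V A = (LEAST k. dicolourable V A k)"

definition uadj :: "('a \<times> 'a) set \<Rightarrow> 'a \<Rightarrow> 'a \<Rightarrow> bool" where
  "uadj A u v \<longleftrightarrow> (u, v) \<in> A \<or> (v, u) \<in> A"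

definition undirected_cycle :: "('a \<times> 'a) set \<Rightarrow> 'a list \<Rightarrow> bool" where
  "undirected_cycle A c \<longleftrightarrow> distinct c \<and> length c \<ge> 3 \<and>
     (\<forall>i<length c. uadj A (c ! i) (c ! ((i + 1) mod length c)))"

definition oriented_forest :: "'a set \<Rightarrow> ('a \<times> 'a) set \<Rightarrow> bool" where
  "oriented_forest V A \<longleftrightarrow> digraph V A \<and> (\<forall>x y. (x, y) \<in> A \<longrightarrow> (y, x) \<notin> A) \<and>
     \<not> (\<exists>c. undirected_cycle A c)"

definition dipath :: "'a set \<Rightarrow> ('a \<times> 'a) set \<Rightarrow> 'a list \<Rightarrow> bool" where
  "dipath V A p \<longleftrightarrow> length p \<ge> 2 \<and> distinct p \<and> set p \<subseteq> V \<and>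
     (\<forall>i. Suc i < length p \<longrightarrow> (p ! i, p ! Suc i) \<in> A)"

definition internal :: "'a list \<Rightarrow> 'a set" where
  "internal p = set (butlast (tl p))"

definition contains_subdivision ::
  "'b set \<Rightarrow> ('b \<times> 'b) set \<Rightarrow> 'a set \<Rightarrow> ('a \<times> 'a) set \<Rightarrow> bool" where
  "contains_subdivision VF AF V A \<longleftrightarrow>
     (\<exists>(phi :: 'b \<Rightarrow> 'a) (P :: 'b \<times> 'b \<Rightarrow> 'a list).
        inj_on phi VF \<and> phi ` VF \<subseteq> V \<and>
        (\<forall>e\<in>AF. dipath V A (P e) \<and> hd (P e) = phi (fst e) \<and> last (P e) = phi (snd e) \<and>
                 internal (P e) \<inter> phi ` VF = {}) \<and>
        (\<forall>e\<in>AF. \<forall>e'\<in>AF. e \<noteq> e' \<longrightarrow> internal (P e) \<inter> internal (P e') = {}))"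

text \<open>mad_chi(F): least c such that every (finite) digraph D with dichromatic number \<ge> c
  contains a subdivision of F. Digraphs are taken up to isomorphism, with vertices in nat.\<close>
definition mad_dichromatic :: "'b set \<Rightarrow> ('b \<times> 'b) set \<Rightarrow> nat" where
  "mad_dichromatic VF AF = (LEAST c. \<forall>(V :: nat set) A. digraph V A \<and> dichromatic_number V A \<ge> c
       \<longrightarrow> contains_subdivision VF AF V A)"

end

theory Submission
  imports Defs
begin

lemma acyc_ext:
  assumes "acyclic {(x,y). (x,y)\<in>R \<and> x\<noteq>v \<and> y\<noteq>v}" and "\<forall>y. (v,y)\<notin>R"
  shows "acyclic R"
proof -
  let ?S = "{(x,y). (x,y)\<in>R \<and> x\<noteq>v \<and> y\<noteq>v}"
  have key: "(a,b)\<in>R\<^sup>+ \<Longrightarrow> b\<noteq>v \<longrightarrow> (a,b)\<in>?S\<^sup>+" for a b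
  proof (induction rule: trancl_induct)
    case (base y) thus ?case using assms(2) by (metis (mono_tags, lifting) case_prodI mem_Collect_eq r_into_trancl')
  next
    case (step y z)
    then have "y \<noteq> v" using assms(2) by blast
    thus ?case using step by (metis (mono_tags, lifting) case_prodI mem_Collect_eq trancl.trancl_into_trancl)
  qed
  show ?thesis unfolding acyclic_def
  proof
    fix x show "(x,x)\<notin>R\<^sup>+"
    proof
      assume h: "(x,x)\<in>R\<^sup>+"
      then obtain z where "(x,z)\<in>R" by (meson tranclD)
      hence "x\<noteq>v" using assms(2) by blast
      thus False using key[OF h] assms(1) unfolding acyclic_def by blast
    qed
  qed
qed

lemma acyc_ext':
  assumes "acyclic {(x,y). (x,y)\<in>R \<and> x\<noteq>v \<and> y\<noteq>v}" and "\<forall>y. (y,v)\<notin>R"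
  shows "acyclic R"
proof -
  have "{(x,y). (x,y)\<in>R\<inverse> \<and> x\<noteq>v \<and> y\<noteq>v} = {(x,y). (x,y)\<in>R \<and> x\<noteq>v \<and> y\<noteq>v}\<inverse>" by auto
  hence h1: "acyclic {(x,y). (x,y)\<in>R\<inverse> \<and> x\<noteq>v \<and> y\<noteq>v}" using assms(1) by simp
  have h2: "\<forall>y. (v,y)\<notin>R\<inverse>" using assms(2) by simp
  have "acyclic (R\<inverse>)" by (rule acyc_ext[OF h1 h2])
  thus ?thesis by simp
qed

lemma free_colour:
  assumes "finite S" "card S < k"
  shows "\<exists>c<k. c \<notin> S"
proof (rule ccontr)
  assume "\<not> ?thesis"
  hence "{..<k} \<subseteq> S" by auto
  hence "card {..<k} \<le> card S" by (rule card_mono[OF assms(1)])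
  hence "k \<le> card S" by simp
  thus False using assms by simp
qed

lemma colour_lemma:
  assumes "finite V" "\<forall>x. (x,x)\<notin>A"
    and "\<forall>W\<subseteq>V. W \<noteq> {} \<longrightarrow> (\<exists>w\<in>W. card {u\<in>W. (w,u)\<in>A} < k \<or> card {u\<in>W. (u,w)\<in>A} < k)"
  shows "dicolourable V A k"
  using assms
proof (induction "card V" arbitrary: V rule: less_induct)
  case less
  show ?case
  proof (cases "V = {}")
    case True
    show ?thesis unfolding dicolourable_def using True
      by (rule_tac x="\<lambda>_. 0" in exI) (simp add: acyclic_def)
  next
    case False
    then obtain w where w: "w\<in>V" and wc: "card {u\<in>V. (w,u)\<in>A} < k \<or> card {u\<in>V. (u,w)\<in>A} < k"
      using less.prems(3)[rule_format, of V] by blast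
    have "dicolourable (V-{w}) A k"
    proof (rule less.hyps)
      show "card (V - {w}) < card V" using less.prems(1) w by (rule card_Diff1_less)
      show "finite (V-{w})" using less.prems(1) by simp
      show "\<forall>x. (x,x)\<notin>A" using less.prems(2) .
      show "\<forall>W\<subseteq>V-{w}. W \<noteq> {} \<longrightarrow> (\<exists>w\<in>W. card {u\<in>W. (w,u)\<in>A} < k \<or> card {u\<in>W. (u,w)\<in>A} < k)"
      proof (intro allI impI)
        fix W assume W: "W \<subseteq> V-{w}" "W \<noteq> {}"
        hence "W \<subseteq> V" by blast
        thus "\<exists>w\<in>W. card {u\<in>W. (w,u)\<in>A} < k \<or> card {u\<in>W. (u,w)\<in>A} < k"
          using less.prems(3) W(2) by blast
      qed
    qed
    then obtain g where g1: "\<forall>v\<in>V-{w}. g v < k"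
      and g2: "\<forall>i<k. acyclic (A \<inter> ({v\<in>V-{w}. g v = i} \<times> {v\<in>V-{w}. g v = i}))"
      unfolding dicolourable_def by blast
    have eqS: "{(x,y). (x,y)\<in>A \<inter> ({v\<in>V. (g(w:=c)) v = i} \<times> {v\<in>V. (g(w:=c)) v = i}) \<and> x\<noteq>w \<and> y\<noteq>w}
        = A \<inter> ({v\<in>V-{w}. g v = i} \<times> {v\<in>V-{w}. g v = i})" for c i
      by auto
    from wc show ?thesis
    proof
      assume h: "card {u\<in>V. (w,u)\<in>A} < k"
      have "card (g ` {u\<in>V. (w,u)\<in>A}) < k"
        using h card_image_le[of "{u\<in>V. (w,u)\<in>A}" g] less.prems(1) by simp
      moreover have "finite (g ` {u\<in>V. (w,u)\<in>A})" using less.prems(1) by simp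
      ultimately obtain c where c: "c<k" "c \<notin> g ` {u\<in>V. (w,u)\<in>A}"
        using free_colour by blast
      show ?thesis unfolding dicolourable_def
      proof (rule exI[of _ "g(w:=c)"], intro conjI allI impI ballI)
        fix v assume "v\<in>V" thus "(g(w:=c)) v < k" using g1 c by auto
      next
        fix i assume i: "i<k"
        show "acyclic (A \<inter> ({v\<in>V. (g(w:=c)) v = i} \<times> {v\<in>V. (g(w:=c)) v = i}))"
          apply (rule acyc_ext[where v=w])
          using eqS g2 i apply simp
          using c less.prems(2) by (auto simp: image_iff)
      qed
    next
      assume h: "card {u\<in>V. (u,w)\<in>A} < k"
      have "card (g ` {u\<in>V. (u,w)\<in>A}) < k"
        using h card_image_le[of "{u\<in>V. (u,w)\<in>A}" g] less.prems(1) by simp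
      moreover have "finite (g ` {u\<in>V. (u,w)\<in>A})" using less.prems(1) by simp
      ultimately obtain c where c: "c<k" "c \<notin> g ` {u\<in>V. (u,w)\<in>A}"
        using free_colour by blast
      show ?thesis unfolding dicolourable_def
      proof (rule exI[of _ "g(w:=c)"], intro conjI allI impI ballI)
        fix v assume "v\<in>V" thus "(g(w:=c)) v < k" using g1 c by auto
      next
        fix i assume i: "i<k"
        show "acyclic (A \<inter> ({v\<in>V. (g(w:=c)) v = i} \<times> {v\<in>V. (g(w:=c)) v = i}))"
          apply (rule acyc_ext'[where v=w])
          using eqS g2 i apply simp
          using c less.prems(2) by (auto simp: image_iff)
      qed
    qed
  qed
qed

lemma of_facts:
  assumes "oriented_forest VF AF"
  shows "finite VF" "AF \<subseteq> VF \<times> VF" "\<forall>x. (x,x)\<notin>AF" "\<forall>x y. (x,y)\<in>AF \<longrightarrow> (y,x)\<notin>AF"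
    "\<not>(\<exists>c. undirected_cycle AF c)"
  using assms unfolding oriented_forest_def digraph_def by auto

lemma leaf:
  assumes of: "oriented_forest VF AF" and ne: "VF \<noteq> {}"
  shows "\<exists>l\<in>VF. \<forall>u w. uadj AF l u \<longrightarrow> uadj AF l w \<longrightarrow> u = w"
proof (rule ccontr)
  assume H: "\<not> ?thesis"
  hence deg2: "\<forall>l\<in>VF. \<exists>u w. uadj AF l u \<and> uadj AF l w \<and> u \<noteq> w" by blast
  note F = of_facts[OF of]
  define Q where "Q p \<longleftrightarrow> distinct p \<and> p \<noteq> [] \<and> set p \<subseteq> VF \<and>
      (\<forall>i. Suc i < length p \<longrightarrow> uadj AF (p!i) (p!Suc i))" for p
  define L where "L n \<longleftrightarrow> (\<exists>p. Q p \<and> length p = n)" for n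
  obtain v where v: "v \<in> VF" using ne by blast
  have "Q [v]" using v unfolding Q_def by simp
  hence L1: "L 1" unfolding L_def by force
  have bnd: "\<forall>n. L n \<longrightarrow> n \<le> card VF"
  proof (intro allI impI)
    fix n assume "L n"
    then obtain p where "Q p" "length p = n" unfolding L_def by blast
    hence "card (set p) = n" "set p \<subseteq> VF" unfolding Q_def by (auto simp: distinct_card)
    thus "n \<le> card VF" using card_mono[OF F(1)] by blast
  qed
  obtain n where Ln: "L n" and nmax: "\<forall>m. L m \<longrightarrow> m \<le> n"
    using Nat.ex_has_greatest_nat[OF L1 bnd] by blast
  obtain p where Qp: "Q p" and lp: "length p = n" using Ln unfolding L_def by blast
  have pne: "p \<noteq> []" and pd: "distinct p" and pV: "set p \<subseteq> VF"
    and padj: "\<And>i. Suc i < length p \<Longrightarrow> uadj AF (p!i) (p!Suc i)"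
    using Qp unfolding Q_def by auto
  define x where "x = last p"
  have xV: "x \<in> VF" using pne pV unfolding x_def by auto
  obtain u w where uw: "uadj AF x u" "uadj AF x w" "u \<noteq> w" using deg2 xV by blast
  obtain y where y: "uadj AF x y" and ny: "length p \<ge> 2 \<Longrightarrow> y \<noteq> p!(length p - 2)"
  proof (cases "u = p!(length p - 2)")
    case True thus ?thesis using that uw by metis
  next
    case False thus ?thesis using that uw by metis
  qed
  have yV: "y \<in> VF" using F(2) y unfolding uadj_def by auto
  have yx: "y \<noteq> x" using F(3) y unfolding uadj_def by auto
  have xlast: "p ! (length p - 1) = x" using pne unfolding x_def by (simp add: last_conv_nth)
  show False
  proof (cases "y \<in> set p")
    case False
    have "Q (p @ [y])" unfolding Q_def
    proof (intro conjI allI impI)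
      show "distinct (p @ [y])" using pd False by simp
      show "p @ [y] \<noteq> []" by simp
      show "set (p @ [y]) \<subseteq> VF" using pV yV by simp
      fix i assume i: "Suc i < length (p @ [y])"
      show "uadj AF ((p @ [y]) ! i) ((p @ [y]) ! Suc i)"
      proof (cases "Suc i < length p")
        case True thus ?thesis using padj[OF True] by (simp add: nth_append)
      next
        case False
        hence "i = length p - 1" using i by simp
        hence "(p @ [y]) ! i = x" "(p @ [y]) ! Suc i = y" using pne xlast
          by (auto simp: nth_append)
        thus ?thesis using y by simp
      qed
    qed
    hence "L (Suc n)" unfolding L_def using lp by (rule_tac x="p@[y]" in exI) simp
    thus False using nmax by fastforce
  next
    case True
    then obtain j where j: "j < length p" "p ! j = y" by (auto simp: in_set_conv_nth)
    have j1: "j \<noteq> length p - 1" using j xlast yx by auto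
    have j2: "length p \<ge> 2 \<Longrightarrow> j \<noteq> length p - 2" using ny j by auto
    have j3: "j + 3 \<le> length p"
    proof (cases "length p \<ge> 2")
      case True thus ?thesis using j j1 j2 by linarith
    next
      case False thus ?thesis using j j1 by linarith
    qed
    define c where "c = drop j p"
    have lc: "length c = length p - j" unfolding c_def by simp
    have "undirected_cycle AF c" unfolding undirected_cycle_def
    proof (intro conjI allI impI)
      show "distinct c" unfolding c_def using pd by simp
      show "3 \<le> length c" using lc j3 by simp
      fix i assume i: "i < length c"
      show "uadj AF (c ! i) (c ! ((i + 1) mod length c))"
      proof (cases "Suc i < length c")
        case True
        hence "(i+1) mod length c = Suc i" by simp
        moreover have "c ! i = p ! (j+i)" "c ! Suc i = p ! Suc (j+i)" unfolding c_def
          using True lc by auto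
        moreover have "Suc (j+i) < length p" using True lc by simp
        ultimately show ?thesis using padj by simp
      next
        case False
        hence "i = length c - 1" using i by simp
        hence "i + 1 = length c" using i by simp
        hence "(i+1) mod length c = 0" by simp
        moreover have "c ! 0 = y" unfolding c_def using j by simp
        moreover have "c ! i = x" unfolding c_def using \<open>i = length c - 1\<close> lc j xlast
          by (simp add: Suc_leI)
        ultimately show ?thesis using y by simp
      qed
    qed
    thus False using F(5) by blast
  qed
qed

lemma pick_fresh:
  assumes "finite X" "finite B" "card B < card X"
  shows "\<exists>z\<in>X. z \<notin> B"
proof (rule ccontr)
  assume "\<not> ?thesis" hence "X \<subseteq> B" by blast
  hence "card X \<le> card B" using card_mono[OF assms(2)] by blast
  thus False using assms(3) by simp
qed

lemma uc_mono: "A' \<subseteq> A \<Longrightarrow> undirected_cycle A' c \<Longrightarrow> undirected_cycle A c"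
  unfolding undirected_cycle_def uadj_def by blast

lemma of_sub:
  assumes "oriented_forest VF AF"
  shows "oriented_forest (VF - {l}) (AF \<inter> ((VF-{l}) \<times> (VF-{l})))"
proof -
  note F = of_facts[OF assms]
  have "\<not>(\<exists>c. undirected_cycle (AF \<inter> ((VF-{l}) \<times> (VF-{l}))) c)"
    using F(5) uc_mono[of "AF \<inter> ((VF-{l}) \<times> (VF-{l}))" AF] by blast
  thus ?thesis unfolding oriented_forest_def digraph_def using F(1-4) by auto
qed

lemma ext_phi:
  assumes "inj_on phi' (VF-{l})" "phi'`(VF-{l}) \<subseteq> W"
    "\<forall>x y. (x,y)\<in>AF \<inter> ((VF-{l}) \<times> (VF-{l})) \<longrightarrow> (phi' x, phi' y)\<in>A"
    "z\<in>W" "z\<notin>phi'`(VF-{l})" "AF \<subseteq> VF\<times>VF" "l\<in>VF"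
    "\<forall>x y. (x,y)\<in>AF \<longrightarrow> (x = l \<or> y = l) \<longrightarrow> ((phi'(l:=z)) x, (phi'(l:=z)) y)\<in>A"
  shows "\<exists>phi. inj_on phi VF \<and> phi`VF \<subseteq> W \<and> (\<forall>x y. (x,y)\<in>AF \<longrightarrow> (phi x, phi y)\<in>A)"
proof (rule exI[of _ "phi'(l:=z)"], intro conjI allI impI)
  have eq: "VF = insert l (VF-{l})" using assms(7) by blast
  have i1: "inj_on (phi'(l:=z)) (VF-{l})" using assms(1) by (simp add: inj_on_def)
  have i2: "(phi'(l:=z)) l \<notin> (phi'(l:=z)) ` (VF-{l} - {l})" using assms(5) by auto
  have "inj_on (phi'(l:=z)) (insert l (VF-{l}))" unfolding inj_on_insert using i1 i2 by blast
  thus "inj_on (phi'(l:=z)) VF" using eq by metis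
  show "(phi'(l:=z)) ` VF \<subseteq> W" using assms(2,4) by auto
  fix x y assume xy: "(x,y)\<in>AF"
  show "((phi'(l:=z)) x, (phi'(l:=z)) y)\<in>A"
  proof (cases "x = l \<or> y = l")
    case True thus ?thesis using assms(8) xy by blast
  next
    case False
    hence "(x,y)\<in>AF \<inter> ((VF-{l}) \<times> (VF-{l}))" using xy assms(6) by auto
    thus ?thesis using assms(3) False by auto
  qed
qed

lemma embed:
  assumes "oriented_forest VF AF" "card VF \<le> Suc k" "finite W" "W \<noteq> {}"
    "\<forall>x. (x,x)\<notin>A"
    "\<forall>w\<in>W. k \<le> card {u\<in>W. (w,u)\<in>A} \<and> k \<le> card {u\<in>W. (u,w)\<in>A}"
  shows "\<exists>phi. inj_on phi VF \<and> phi`VF \<subseteq> W \<and> (\<forall>x y. (x,y)\<in>AF \<longrightarrow> (phi x, phi y)\<in>A)"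
  using assms(1,2)
proof (induction "card VF" arbitrary: VF AF rule: less_induct)
  case less
  note F = of_facts[OF less.prems(1)]
  show ?case
  proof (cases "VF = {}")
    case True
    hence "AF = {}" using F(2) by auto
    thus ?thesis using True by auto
  next
    case False
    obtain l where l: "l \<in> VF" and lu: "\<forall>u w. uadj AF l u \<longrightarrow> uadj AF l w \<longrightarrow> u = w"
      using leaf[OF less.prems(1) False] by blast
    let ?V' = "VF - {l}" and ?A' = "AF \<inter> ((VF-{l}) \<times> (VF-{l}))"
    have cV': "card ?V' = card VF - 1" using l F(1) by simp
    have "\<exists>phi. inj_on phi ?V' \<and> phi`?V' \<subseteq> W \<and> (\<forall>x y. (x,y)\<in>?A' \<longrightarrow> (phi x, phi y)\<in>A)"
    proof (rule less.hyps)
      show "card ?V' < card VF" using F(1) l by (rule card_Diff1_less)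
      show "oriented_forest ?V' ?A'" by (rule of_sub[OF less.prems(1)])
      show "card ?V' \<le> Suc k" using cV' less.prems(2) by simp
    qed
    then obtain phi' where p1: "inj_on phi' ?V'" and p2: "phi'`?V' \<subseteq> W"
      and p3: "\<forall>x y. (x,y)\<in>?A' \<longrightarrow> (phi' x, phi' y)\<in>A" by blast
    have finI: "finite (phi'`?V')" using F(1) by simp
    have cI: "card (phi'`?V') \<le> k" using card_image_le[of ?V' phi'] F(1) cV' less.prems(2) by simp
    show ?thesis
    proof (cases "\<exists>u. uadj AF l u")
      case False
      obtain w0 where w0: "w0 \<in> W" using assms(4) by blast
      have sub: "{u\<in>W. (w0,u)\<in>A} \<subseteq> W - {w0}" using assms(5) by auto
      have "k \<le> card {u\<in>W. (w0,u)\<in>A}" using assms(6) w0 by blast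
      also have "\<dots> \<le> card (W - {w0})" using card_mono[OF _ sub] assms(3) by simp
      finally have "k \<le> card (W - {w0})" .
      moreover have "card W = Suc (card (W - {w0}))" using card_Suc_Diff1[OF assms(3) w0] by simp
      ultimately have "card (phi'`?V') < card W" using cI by linarith
      then obtain z where z: "z \<in> W" "z \<notin> phi'`?V'"
        using pick_fresh[OF assms(3) finI] by blast
      show ?thesis
      proof (rule ext_phi[OF p1 p2 p3 z(1) z(2) F(2) l])
        show "\<forall>x y. (x,y)\<in>AF \<longrightarrow> (x = l \<or> y = l) \<longrightarrow> ((phi'(l:=z)) x, (phi'(l:=z)) y)\<in>A"
          using False unfolding uadj_def by blast
      qed
    next
      case True
      then obtain u where u: "uadj AF l u" by blast
      have uV: "u \<in> VF" "u \<noteq> l" using u F(2) F(3) unfolding uadj_def by auto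
      hence uV': "u \<in> ?V'" by simp
      have only: "\<And>x. uadj AF l x \<Longrightarrow> x = u" using lu u by blast
      have cV'': "card (?V' - {u}) \<le> k - 1" using uV' cV' less.prems(2) F(1) by simp
      have finI2: "finite (phi'`(?V'-{u}))" using F(1) by simp
      have cI2: "card (phi'`(?V'-{u})) < k"
      proof -
        have "card ?V' \<ge> 1" using uV' F(1) by (metis One_nat_def Suc_leI card_gt_0_iff empty_iff finite_Diff)
        hence "k \<ge> 1" using cV' less.prems(2) by simp
        thus ?thesis using card_image_le[of "?V'-{u}" phi'] F(1) cV'' by simp
      qed
      have puW: "phi' u \<in> W" using p2 uV' by blast
      show ?thesis
      proof (cases "(u,l)\<in>AF")
        case True
        let ?O = "{x\<in>W. (phi' u, x)\<in>A}"
        have "card ?O \<ge> k" using assms(6) puW by blast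
        then obtain z where z: "z \<in> ?O" "z \<notin> phi'`(?V'-{u})"
          using pick_fresh[of ?O "phi'`(?V'-{u})"] assms(3) finI2 cI2 by auto
        have zI: "z \<notin> phi'`?V'"
        proof
          assume "z \<in> phi'`?V'"
          hence "z = phi' u \<or> z \<in> phi'`(?V'-{u})" by blast
          thus False using z assms(5) by auto
        qed
        show ?thesis
        proof (rule ext_phi[OF p1 p2 p3 _ zI F(2) l])
          show "z \<in> W" using z by simp
          show "\<forall>x y. (x,y)\<in>AF \<longrightarrow> (x = l \<or> y = l) \<longrightarrow> ((phi'(l:=z)) x, (phi'(l:=z)) y)\<in>A"
          proof (intro allI impI)
            fix x y assume xy: "(x,y)\<in>AF" and dis: "x = l \<or> y = l"
            from dis show "((phi'(l:=z)) x, (phi'(l:=z)) y)\<in>A"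
            proof
              assume "x = l"
              hence "y = u" using only xy unfolding uadj_def by blast
              thus ?thesis using xy \<open>x = l\<close> True F(4) by blast
            next
              assume "y = l"
              hence "x = u" using only xy unfolding uadj_def by blast
              thus ?thesis using \<open>y = l\<close> uV z by auto
            qed
          qed
        qed
      next
        case False
        hence lu': "(l,u)\<in>AF" using u unfolding uadj_def by blast
        let ?O = "{x\<in>W. (x, phi' u)\<in>A}"
        have "card ?O \<ge> k" using assms(6) puW by blast
        then obtain z where z: "z \<in> ?O" "z \<notin> phi'`(?V'-{u})"
          using pick_fresh[of ?O "phi'`(?V'-{u})"] assms(3) finI2 cI2 by auto
        have zI: "z \<notin> phi'`?V'"
        proof
          assume "z \<in> phi'`?V'"
          hence "z = phi' u \<or> z \<in> phi'`(?V'-{u})" by blast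
          thus False using z assms(5) by auto
        qed
        show ?thesis
        proof (rule ext_phi[OF p1 p2 p3 _ zI F(2) l])
          show "z \<in> W" using z by simp
          show "\<forall>x y. (x,y)\<in>AF \<longrightarrow> (x = l \<or> y = l) \<longrightarrow> ((phi'(l:=z)) x, (phi'(l:=z)) y)\<in>A"
          proof (intro allI impI)
            fix x y assume xy: "(x,y)\<in>AF" and dis: "x = l \<or> y = l"
            from dis show "((phi'(l:=z)) x, (phi'(l:=z)) y)\<in>A"
            proof
              assume "x = l"
              hence "y = u" using only xy unfolding uadj_def by blast
              thus ?thesis using \<open>x = l\<close> uV z by auto
            next
              assume "y = l"
              hence "x = u" using only xy unfolding uadj_def by blast
              thus ?thesis using xy \<open>y = l\<close> False by blast
            qed
          qed
        qed
      qed
    qed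
  qed
qed

theorem corollary35:
  fixes VF :: "'b set" and AF :: "('b \<times> 'b) set"
  assumes "oriented_forest VF AF"
  shows "mad_dichromatic VF AF = card VF"
proof -
  note of = assms
  note F = of_facts[OF of]
  define n where "n = card VF"
  define P where "P c \<longleftrightarrow> (\<forall>(V::nat set) A. digraph V A \<and> dichromatic_number V A \<ge> c
       \<longrightarrow> contains_subdivision VF AF V A)" for c
  have mad: "mad_dichromatic VF AF = (LEAST c. P c)" unfolding mad_dichromatic_def P_def by simp
  have Pn: "P n" unfolding P_def
  proof (intro allI impI, elim conjE)
    fix V :: "nat set" and A assume dg: "digraph V A" and dn: "n \<le> dichromatic_number V A"
    have dV: "finite V" "A \<subseteq> V \<times> V" "\<forall>x. (x,x)\<notin>A" using dg unfolding digraph_def by auto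
    show "contains_subdivision VF AF V A"
    proof (cases "n = 0")
      case True
      hence "VF = {}" using F(1) n_def by simp
      hence "AF = {}" using F(2) by auto
      thus ?thesis using \<open>VF = {}\<close> unfolding contains_subdivision_def by simp
    next
      case False
      define k where "k = n - 1"
      have nk: "n = Suc k" using False k_def by simp
      have nd: "\<not> dicolourable V A k"
      proof
        assume "dicolourable V A k"
        hence "dichromatic_number V A \<le> k" unfolding dichromatic_number_def by (rule Least_le)
        thus False using dn nk by simp
      qed
      have "\<not> (\<forall>W\<subseteq>V. W \<noteq> {} \<longrightarrow> (\<exists>w\<in>W. card {u\<in>W. (w,u)\<in>A} < k \<or> card {u\<in>W. (u,w)\<in>A} < k))"
        using colour_lemma[OF dV(1) dV(3)] nd by blast
      then obtain W where W: "W \<subseteq> V" "W \<noteq> {}"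
        and Wd: "\<forall>w\<in>W. \<not>(card {u\<in>W. (w,u)\<in>A} < k \<or> card {u\<in>W. (u,w)\<in>A} < k)" by blast
      have fW: "finite W" using W(1) dV(1) finite_subset by blast
      have Wd': "\<forall>w\<in>W. k \<le> card {u\<in>W. (w,u)\<in>A} \<and> k \<le> card {u\<in>W. (u,w)\<in>A}"
        using Wd by (simp add: not_less)
      have cVF: "card VF \<le> Suc k" using nk n_def by simp
      obtain phi where ph: "inj_on phi VF" "phi`VF \<subseteq> W" "\<forall>x y. (x,y)\<in>AF \<longrightarrow> (phi x, phi y)\<in>A"
        using embed[OF of cVF fW W(2) dV(3) Wd'] by blast
      show ?thesis unfolding contains_subdivision_def
      proof (rule exI[of _ phi], rule exI[of _ "\<lambda>e. [phi (fst e), phi (snd e)]"], intro conjI ballI impI)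
        show "inj_on phi VF" by (rule ph(1))
        show "phi`VF \<subseteq> V" using ph(2) W(1) by blast
      next
        fix e assume e: "e \<in> AF"
        obtain a b where ab: "e = (a,b)" by (cases e)
        have abV: "a \<in> VF" "b \<in> VF" using e ab F(2) by auto
        have "a \<noteq> b" using e ab F(3) by auto
        hence ne: "phi a \<noteq> phi b" using inj_on_contraD[OF ph(1) _ abV] by blast
        have arc: "(phi a, phi b) \<in> A" using ph(3) e ab by blast
        have inV: "phi a \<in> V" "phi b \<in> V" using ph(2) W(1) abV by auto
        show "dipath V A [phi (fst e), phi (snd e)]" unfolding dipath_def ab
        proof (intro conjI allI impI)
          fix i assume "Suc i < length [phi (fst (a,b)), phi (snd (a,b))]"
          hence "i = 0" by simp
          thus "([phi (fst (a,b)), phi (snd (a,b))] ! i, [phi (fst (a,b)), phi (snd (a,b))] ! Suc i) \<in> A"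
            using arc by simp
        qed (use ne inV in auto)
        show "hd [phi (fst e), phi (snd e)] = phi (fst e)" by simp
        show "last [phi (fst e), phi (snd e)] = phi (snd e)" by simp
        show "internal [phi (fst e), phi (snd e)] \<inter> phi ` VF = {}" unfolding internal_def by simp
      next
        fix e e' assume "e \<in> AF" "e' \<in> AF" "e \<noteq> e'"
        show "internal [phi (fst e), phi (snd e)] \<inter> internal [phi (fst e'), phi (snd e')] = {}"
          unfolding internal_def by simp
      qed
    qed
  qed
  have lower: "n \<le> c" if Pc: "P c" for c
  proof (rule ccontr)
    assume "\<not> n \<le> c"
    hence cn: "c < n" by simp
    define m where "m = n - 1"
    define V0 :: "nat set" where "V0 = {..<m}"
    define A0 where "A0 = {(x,y). x\<in>V0 \<and> y\<in>V0 \<and> x \<noteq> y}"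
    have dg0: "digraph V0 A0" unfolding digraph_def V0_def A0_def by auto
    have ndc: "\<not> dicolourable V0 A0 k" if km: "k < m" for k
    proof
      assume "dicolourable V0 A0 k"
      then obtain f where f1: "\<forall>v\<in>V0. f v < k"
        and f2: "\<forall>i<k. acyclic (A0 \<inter> ({v\<in>V0. f v = i} \<times> {v\<in>V0. f v = i}))"
        unfolding dicolourable_def by blast
      have "\<not> inj_on f V0"
      proof
        assume inj: "inj_on f V0"
        have "f ` V0 \<subseteq> {..<k}" using f1 by auto
        hence "card (f ` V0) \<le> card {..<k}" by (rule card_mono[rotated]) simp
        hence "card (f ` V0) \<le> k" by simp
        moreover have "card (f ` V0) = m" using card_image[OF inj] V0_def by simp
        ultimately show False using km by simp
      qed
      then obtain x y where xy: "x \<in> V0" "y \<in> V0" "x \<noteq> y" "f x = f y" unfolding inj_on_def by blast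
      let ?R = "A0 \<inter> ({v\<in>V0. f v = f x} \<times> {v\<in>V0. f v = f x})"
      have r1: "(x,y) \<in> ?R" and r2: "(y,x) \<in> ?R" using xy unfolding A0_def by auto
      have "(x,x) \<in> ?R\<^sup>+" by (rule trancl_into_trancl[OF r_into_trancl[OF r1] r2])
      moreover have "acyclic ?R" using f2[rule_format, OF f1[rule_format, OF xy(1)]] .
      ultimately show False unfolding acyclic_def by blast
    qed
    have dcm: "dicolourable V0 A0 m" unfolding dicolourable_def
    proof (rule exI[of _ id], intro conjI ballI allI impI)
      fix v assume "v \<in> V0" thus "id v < m" unfolding V0_def by simp
    next
      fix i assume "i < m"
      have "A0 \<inter> ({v\<in>V0. id v = i} \<times> {v\<in>V0. id v = i}) = {}" unfolding A0_def by auto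
      thus "acyclic (A0 \<inter> ({v\<in>V0. id v = i} \<times> {v\<in>V0. id v = i}))" by (simp add: acyclic_def)
    qed
    have "m \<le> dichromatic_number V0 A0"
    proof (rule ccontr)
      assume "\<not> m \<le> dichromatic_number V0 A0"
      moreover have "dicolourable V0 A0 (dichromatic_number V0 A0)"
        unfolding dichromatic_number_def by (rule LeastI[of "dicolourable V0 A0" m, OF dcm])
      ultimately show False using ndc[of "dichromatic_number V0 A0"] not_le by blast
    qed
    hence "c \<le> dichromatic_number V0 A0" using cn m_def by linarith
    hence "contains_subdivision VF AF V0 A0" using Pc dg0 unfolding P_def by simp
    hence "\<exists>phi. inj_on phi VF \<and> phi ` VF \<subseteq> V0" unfolding contains_subdivision_def
      by (elim exE conjE) (rule exI, rule conjI)
    then obtain phi where "inj_on phi VF" "phi ` VF \<subseteq> V0" by blast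
    moreover have "finite V0" unfolding V0_def by simp
    ultimately have "card VF \<le> card V0" using card_inj_on_le[of phi VF V0] by blast
    moreover have "card V0 = m" unfolding V0_def by simp
    ultimately show False using cn m_def n_def by linarith
  qed
  show ?thesis using mad Least_equality[of P n] Pn lower n_def by simp
qed

end
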